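(* Under the network setting of the context, after a suitable relabeling of the classes $\mathcal I$, there exist a lower-triangular matrix $B_1\in\mathbb R^{I\times I}$ with strictly positive diagonal entries and a matrix $B_2\in\mathbb R^{I\times J}$ such that for all $x\in\mathbb R^I$ and $u=(u^c,u^s)\in\mathbb U$, $$b(x,u)=-B_1\big(x-(e\cdot x)^+u^c\big)+(e\cdot x)^-B_2u^s-(e\cdot x)^+\Gamma u^c+\ell,$$ where $\Gamma=\operatorname{diag}(\gamma_1,\dots,\gamma_I)$.
   Context: Network setting. Let $\mathcal I=\{1,\dots,I\}$ (customer classes), $\mathcal J=\{1,\dots,J\}$ (server pools), and let $\mathcal G$ be a bipartite graph on $\mathcal I\cup\mathcal J$ with edge set $\mathcal E\subset\mathcal I\times\mathcal J$ (write $i\sim j$ if $(i,j)\in\mathcal E$) which is a tree; $\mathcal J(i)=\{j:i\sim j\}$. Given constants $\lambda_i>0$, $\gamma_i\ge0$, $\ell_i\in\mathbb R$ for $i\in\mathcal I$, and $\mu_{ij}>0$ if $i\sim j$, $\mu_{ij}=0$ otherwise. $e$ denotes the all-ones vector, $a^+=\max(a,0)$, $a^-=-\min(a,0)$. For $(\alpha,\beta)\in\mathbb R^I\times\mathbb R^J$ with $e\cdot\alpha=e\cdot\beta$, $G(\alpha,\beta)$ is the unique matrix $\psi\in\mathbb R^{I\times J}$ with $\sum_j\psi_{ij}=\alpha_i$ for all $i$, $\sum_i\psi_{ij}=\beta_j$ for all $j$, and $\psi_{ij}=0$ whenever $i\not\sim j$ (existence and uniqueness hold since $\mathcal G$ is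 a tree). Action set $\mathbb U=\{u=(u^c,u^s)\in\mathbb R^I_+\times\mathbb R^J_+: e\cdot u^c=e\cdot u^s=1\}$. For $x\in\mathbb R^I$, $u\in\mathbb U$: $\hat G[u](x)=G\big(x-(e\cdot x)^+u^c,\,-(e\cdot x)^-u^s\big)$ and the drift $b_i(x,u)=-\sum_{j\in\mathcal J(i)}\mu_{ij}\hat G_{ij}[u](x)-\gamma_i(e\cdot x)^+u^c_i+\ell_i$, $i\in\mathcal I$. *)

theory Defs
  imports "HOL-Analysis.Analysis"
begin

text \<open>Classes are indexed by {..<nI}, pools by {..<nJ}; vectors are functions nat => real,
  matrices are functions nat => nat => real (only entries in range matter).\<close>

definition netV :: "nat \<Rightarrow> nat \<Rightarrow> (nat + nat) set" where
  "netV nI nJ = Inl ` {..<nI} \<union> Inr ` {..<nJ}"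

fun netAdj :: "(nat \<times> nat) set \<Rightarrow> nat + nat \<Rightarrow> nat + nat \<Rightarrow> bool" where
  "netAdj E (Inl i) (Inr j) = ((i, j) \<in> E)"
| "netAdj E (Inr j) (Inl i) = ((i, j) \<in> E)"
| "netAdj E _ _ = False"

definition is_walk :: "(nat \<times> nat) set \<Rightarrow> (nat + nat) list \<Rightarrow> bool" where
  "is_walk E ps = (ps \<noteq> [] \<and> (\<forall>k. Suc k < length ps \<longrightarrow> netAdj E (ps ! k) (ps ! Suc k)))"

definition graph_connected :: "nat \<Rightarrow> nat \<Rightarrow> (nat \<times> nat) set \<Rightarrow> bool" where
  "graph_connected nI nJ E = (\<forall>v\<in>netV nI nJ. \<forall>w\<in>netV nI nJ.
      \<exists>ps. is_walk E ps \<and> set ps \<subseteq> netV nI nJ \<and> hd ps = v \<and> last ps = w)"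

definition has_cycle :: "nat \<Rightarrow> nat \<Rightarrow> (nat \<times> nat) set \<Rightarrow> bool" where
  "has_cycle nI nJ E = (\<exists>ps. is_walk E ps \<and> set ps \<subseteq> netV nI nJ \<and> distinct ps \<and>
      length ps \<ge> 3 \<and> netAdj E (last ps) (hd ps))"

definition is_tree :: "nat \<Rightarrow> nat \<Rightarrow> (nat \<times> nat) set \<Rightarrow> bool" where
  "is_tree nI nJ E = (E \<subseteq> {..<nI} \<times> {..<nJ} \<and> graph_connected nI nJ E \<and> \<not> has_cycle nI nJ E)"

definition Gmat :: "nat \<Rightarrow> nat \<Rightarrow> (nat \<times> nat) set \<Rightarrow> (nat \<Rightarrow> real) \<Rightarrow> (nat \<Rightarrow> real)
    \<Rightarrow> (nat \<Rightarrow> nat \<Rightarrow> real)" where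
  "Gmat nI nJ E \<alpha> \<beta> = (THE \<psi>. (\<forall>i<nI. (\<Sum>j<nJ. \<psi> i j) = \<alpha> i) \<and>
                               (\<forall>j<nJ. (\<Sum>i<nI. \<psi> i j) = \<beta> j) \<and>
                               (\<forall>i j. (i, j) \<notin> E \<longrightarrow> \<psi> i j = 0))"

definition pospart :: "real \<Rightarrow> real" where "pospart a = max a 0"
definition negpart :: "real \<Rightarrow> real" where "negpart a = - min a 0"

definition esum :: "nat \<Rightarrow> (nat \<Rightarrow> real) \<Rightarrow> real" where
  "esum n x = (\<Sum>k<n. x k)"

definition actU :: "nat \<Rightarrow> nat \<Rightarrow> (nat \<Rightarrow> real) \<Rightarrow> (nat \<Rightarrow> real) \<Rightarrow> bool" where
  "actU nI nJ uc us = ((\<forall>i<nI. uc i \<ge> 0) \<and> (\<forall>j<nJ. us j \<ge> 0) \<and>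
                       esum nI uc = 1 \<and> esum nJ us = 1)"

definition Ghat :: "nat \<Rightarrow> nat \<Rightarrow> (nat \<times> nat) set \<Rightarrow> (nat \<Rightarrow> real) \<Rightarrow> (nat \<Rightarrow> real)
    \<Rightarrow> (nat \<Rightarrow> real) \<Rightarrow> (nat \<Rightarrow> nat \<Rightarrow> real)" where
  "Ghat nI nJ E uc us x = Gmat nI nJ E
      (\<lambda>i. x i - pospart (esum nI x) * uc i)
      (\<lambda>j. - negpart (esum nI x) * us j)"

definition drift :: "nat \<Rightarrow> nat \<Rightarrow> (nat \<times> nat) set \<Rightarrow> (nat \<Rightarrow> nat \<Rightarrow> real) \<Rightarrow> (nat \<Rightarrow> real)
    \<Rightarrow> (nat \<Rightarrow> real) \<Rightarrow> (nat \<Rightarrow> real) \<Rightarrow> (nat \<Rightarrow> real) \<Rightarrow> (nat \<Rightarrow> real) \<Rightarrow> nat \<Rightarrow> real" where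
  "drift nI nJ E \<mu> \<gamma> ell x uc us i =
     - (\<Sum>j\<in>{j. j < nJ \<and> (i, j) \<in> E}. \<mu> i j * Ghat nI nJ E uc us x i j)
     - \<gamma> i * pospart (esum nI x) * uc i + ell i"

end

theory Submission
  imports Defs
begin


fun rw :: "('a \<Rightarrow> 'a \<Rightarrow> bool) \<Rightarrow> 'a list \<Rightarrow> bool" where
  "rw R [] = False"
| "rw R [a] = True"
| "rw R (a # b # xs) = (R a b \<and> rw R (b # xs))"

lemma rw_nth: "rw R ps = (ps \<noteq> [] \<and> (\<forall>k. Suc k < length ps \<longrightarrow> R (ps!k) (ps!Suc k)))"
proof (induction R ps rule: rw.induct)
  case (3 R a b xs)
  show ?case
  proof
    assume "rw R (a # b # xs)"
    then show "a # b # xs \<noteq> [] \<and> (\<forall>k. Suc k < length (a # b # xs) \<longrightarrow> R ((a # b # xs) ! k) ((a # b # xs) ! Suc k))"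
      using 3 by (auto simp: nth_Cons split: nat.split)
  next
    assume h: "a # b # xs \<noteq> [] \<and> (\<forall>k. Suc k < length (a # b # xs) \<longrightarrow> R ((a # b # xs) ! k) ((a # b # xs) ! Suc k))"
    have "R a b" using h by (metis length_Cons nth_Cons_0 nth_Cons_Suc zero_less_Suc Suc_less_eq)
    moreover have "\<forall>k. Suc k < length (b # xs) \<longrightarrow> R ((b # xs) ! k) ((b # xs) ! Suc k)"
    proof (intro allI impI)
      fix k assume "Suc k < length (b # xs)"
      then have "Suc (Suc k) < length (a # b # xs)" by simp
      then show "R ((b # xs) ! k) ((b # xs) ! Suc k)" using h by fastforce
    qed
    ultimately show "rw R (a # b # xs)" using 3 by simp
  qed
qed auto

lemma is_walk_rw: "is_walk E ps = rw (netAdj E) ps"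
  by (simp add: is_walk_def rw_nth)

lemma rw_append: "rw R (xs @ y # ys) = (rw R (xs @ [y]) \<and> rw R (y # ys))"
proof (induction xs)
  case Nil then show ?case by simp
next
  case (Cons a xs) then show ?case by (cases xs) auto
qed

lemma rw_mono: "rw R ps \<Longrightarrow> (\<And>a b. R a b \<Longrightarrow> S a b) \<Longrightarrow> rw S ps"
  by (induction R ps rule: rw.induct) auto

lemma rw_restrict: "rw R ps \<Longrightarrow> \<forall>x\<in>set ps. P x \<Longrightarrow> rw (\<lambda>a b. R a b \<and> P a \<and> P b) ps"
  by (induction R ps rule: rw.induct) auto

definition rconn :: "'a set \<Rightarrow> ('a \<Rightarrow> 'a \<Rightarrow> bool) \<Rightarrow> bool" where
  "rconn V R = (\<forall>v\<in>V. \<forall>w\<in>V. \<exists>ps. rw R ps \<and> set ps \<subseteq> V \<and> hd ps = v \<and> last ps = w)"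

definition racyc :: "'a set \<Rightarrow> ('a \<Rightarrow> 'a \<Rightarrow> bool) \<Rightarrow> bool" where
  "racyc V R = (\<not>(\<exists>ps. rw R ps \<and> set ps \<subseteq> V \<and> distinct ps \<and> 3 \<le> length ps \<and> R (last ps) (hd ps)))"

lemma walk_to_path: "rw R ps \<Longrightarrow> \<exists>qs. rw R qs \<and> distinct qs \<and> set qs \<subseteq> set ps \<and> hd qs = hd ps \<and> last qs = last ps"
proof (induction "length ps" arbitrary: ps rule: less_induct)
  case less
  show ?case
  proof (cases "distinct ps")
    case True thus ?thesis using less.prems by blast
  next
    case False
    then obtain xs y ys zs where ps: "ps = xs @ y # ys @ y # zs" using not_distinct_decomp by fastforce
    have a: "rw R (xs @ [y])" "rw R (y # ys @ y # zs)" using less.prems rw_append[of R xs y "ys @ y # zs"] ps by auto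
    then have "rw R (y # zs)" using rw_append[of R "y # ys" y zs] by simp
    then have w: "rw R (xs @ y # zs)" using rw_append[of R xs y zs] a by simp
    have "length (xs @ y # zs) < length ps" using ps by simp
    from less.hyps[OF this w] obtain qs where qs: "rw R qs" "distinct qs" "set qs \<subseteq> set (xs @ y # zs)"
      "hd qs = hd (xs @ y # zs)" "last qs = last (xs @ y # zs)" by blast
    moreover have "hd (xs @ y # zs) = hd ps" by (cases xs) (auto simp: ps)
    moreover have "last (xs @ y # zs) = last ps" by (cases zs) (auto simp: ps)
    moreover have "set (xs @ y # zs) \<subseteq> set ps" by (auto simp: ps)
    ultimately show ?thesis by (intro exI[of _ qs]) auto
  qed
qed

lemma two_elems: "2 \<le> card V \<Longrightarrow> \<exists>a b. a \<in> V \<and> b \<in> V \<and> a \<noteq> b"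
proof (rule ccontr)
  assume c: "2 \<le> card V" "\<not> (\<exists>a b. a \<in> V \<and> b \<in> V \<and> a \<noteq> b)"
  have "card V \<le> Suc 0"
  proof (cases "finite V")
    case True then show ?thesis using c(2) card_le_Suc0_iff_eq by blast
  qed simp
  then show False using c(1) by simp
qed

lemma leaf_generic:
  assumes fin: "finite V" and sym: "\<And>a b. R a b \<Longrightarrow> R b a" and irr: "\<And>a. \<not> R a a"
    and cl: "\<And>a b. R a b \<Longrightarrow> a \<in> V" and con: "rconn V R" and acy: "racyc V R" and two: "2 \<le> card V"
  shows "\<exists>v u. v \<in> V \<and> R v u \<and> (\<forall>w. R v w \<longrightarrow> w = u) \<and>
     rconn (V - {v}) (\<lambda>a b. R a b \<and> a \<noteq> v \<and> b \<noteq> v) \<and> racyc (V - {v}) (\<lambda>a b. R a b \<and> a \<noteq> v \<and> b \<noteq> v)"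
proof -
  define S where "S = {ps. rw R ps \<and> distinct ps \<and> set ps \<subseteq> V}"
  have "S \<subseteq> {ps. set ps \<subseteq> V \<and> length ps \<le> card V}"
    unfolding S_def using fin by (auto simp: distinct_card[symmetric] intro: card_mono)
  then have finS: "finite S" using finite_lists_length_le[OF fin] finite_subset by blast
  obtain a b where ab: "a \<in> V" "b \<in> V" "a \<noteq> b" using two_elems[OF two] by blast
  obtain p1 where p1: "rw R p1" "set p1 \<subseteq> V" "hd p1 = a" "last p1 = b" using con ab unfolding rconn_def by blast
  obtain p0 where p0: "rw R p0" "distinct p0" "set p0 \<subseteq> set p1" "hd p0 = a" "last p0 = b"
    using walk_to_path[OF p1(1)] p1 by blast
  have p0S: "p0 \<in> S" using p0 p1 unfolding S_def by auto
  have len0: "2 \<le> length p0"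
  proof (rule ccontr)
    assume "\<not> 2 \<le> length p0"
    then have "length p0 = 0 \<or> length p0 = 1" by linarith
    then show False using p0 ab by (auto simp: length_Suc_conv)
  qed
  define m where "m = Max (length ` S)"
  have "m \<in> length ` S" unfolding m_def using finS p0S by (intro Max_in) auto
  then obtain ps where psS: "ps \<in> S" and psm: "length ps = m" by auto
  have maxl: "\<And>q. q \<in> S \<Longrightarrow> length q \<le> length ps" unfolding psm m_def using finS by auto
  have "2 \<le> length ps" using maxl[OF p0S] len0 by simp
  then obtain v u rest where ps: "ps = v # u # rest" by (metis Suc_le_length_iff numeral_2_eq_2)
  have psw: "rw R ps" "distinct ps" "set ps \<subseteq> V" using psS unfolding S_def by auto
  have vu: "R v u" using psw ps by simp
  have uniq: "\<forall>w. R v w \<longrightarrow> w = u"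
  proof (intro allI impI, rule ccontr)
    fix w assume vw: "R v w" and wu: "w \<noteq> u"
    show False
    proof (cases "w \<in> set ps")
      case False
      have "w # ps \<in> S" using psw False sym[OF vw] cl[OF sym[OF vw]] unfolding S_def ps by auto
      then show False using maxl by fastforce
    next
      case True
      have "w \<noteq> v" using irr vw by blast
      then have "w \<in> set rest" using True wu ps by auto
      then obtain xs ys where rest: "rest = xs @ w # ys" using split_list[of w rest] by blast
      have "rw R ((v # u # xs) @ w # ys)" using psw ps rest by simp
      then have c1: "rw R ((v # u # xs) @ [w])" using rw_append by fast
      have c2: "distinct ((v # u # xs) @ [w])" using psw ps rest by auto
      have c3: "set ((v # u # xs) @ [w]) \<subseteq> V" using psw ps rest by auto
      have "R (last ((v # u # xs) @ [w])) (hd ((v # u # xs) @ [w]))" using sym[OF vw] by simp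
      then show False using acy c1 c2 c3 unfolding racyc_def by fastforce
    qed
  qed
  have vV: "v \<in> V" using psw ps by auto
  have conn': "rconn (V - {v}) (\<lambda>a b. R a b \<and> a \<noteq> v \<and> b \<noteq> v)"
    unfolding rconn_def
  proof (intro ballI)
    fix a b assume a: "a \<in> V - {v}" and b: "b \<in> V - {v}"
    obtain p1 where p1: "rw R p1" "set p1 \<subseteq> V" "hd p1 = a" "last p1 = b" using con a b unfolding rconn_def by blast
    obtain qs where qs: "rw R qs" "distinct qs" "set qs \<subseteq> set p1" "hd qs = a" "last qs = b"
      using walk_to_path[OF p1(1)] p1 by blast
    have nv: "v \<notin> set qs"
    proof
      assume "v \<in> set qs"
      then obtain xs ys where q: "qs = xs @ v # ys" using split_list[of v qs] by blast
      have "xs \<noteq> []" using q qs a by auto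
      then obtain xs' x where xs: "xs = xs' @ [x]" using rev_exhaust by blast
      have "ys \<noteq> []" using q qs b by auto
      then obtain y ys' where ys: "ys = y # ys'" using list.exhaust by blast
      have "rw R (xs @ [v])" "rw R (v # ys)" using qs(1) q rw_append by fast+
      then have "rw R (xs' @ x # [v])" "R v y" using xs ys by auto
      then have "R x v" using rw_append[of R xs' x "[v]"] by simp
      then have "x = u" "y = u" using uniq sym \<open>R v y\<close> by blast+
      then show False using qs(2) q xs ys by auto
    qed
    have "rw (\<lambda>a b. R a b \<and> a \<noteq> v \<and> b \<noteq> v) qs" using rw_restrict[OF qs(1), of "\<lambda>x. x \<noteq> v"] nv by auto
    moreover have "set qs \<subseteq> V - {v}" using qs p1 nv by auto
    ultimately show "\<exists>ps. rw (\<lambda>a b. R a b \<and> a \<noteq> v \<and> b \<noteq> v) ps \<and> set ps \<subseteq> V - {v} \<and> hd ps = a \<and> last ps = b"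
      using qs by blast
  qed
  have acy': "racyc (V - {v}) (\<lambda>a b. R a b \<and> a \<noteq> v \<and> b \<noteq> v)"
    unfolding racyc_def
  proof
    assume "\<exists>ps. rw (\<lambda>a b. R a b \<and> a \<noteq> v \<and> b \<noteq> v) ps \<and> set ps \<subseteq> V - {v} \<and> distinct ps \<and> 3 \<le> length ps \<and>
      (R (last ps) (hd ps) \<and> last ps \<noteq> v \<and> hd ps \<noteq> v)"
    then obtain cs where cs: "rw (\<lambda>a b. R a b \<and> a \<noteq> v \<and> b \<noteq> v) cs" "set cs \<subseteq> V - {v}" "distinct cs"
      "3 \<le> length cs" "R (last cs) (hd cs)" by blast
    have "rw R cs" using rw_mono[OF cs(1)] by blast
    moreover have "set cs \<subseteq> V" using cs(2) by blast
    ultimately show False using acy cs unfolding racyc_def by blast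
  qed
  show ?thesis using vV vu uniq conn' acy' by blast
qed



definition ntree :: "nat set \<Rightarrow> nat set \<Rightarrow> (nat \<times> nat) set \<Rightarrow> bool" where
  "ntree CI CJ E = (finite CI \<and> finite CJ \<and> E \<subseteq> CI \<times> CJ \<and>
     rconn (Inl ` CI \<union> Inr ` CJ) (netAdj E) \<and> racyc (Inl ` CI \<union> Inr ` CJ) (netAdj E))"

lemma netAdj_sym: "netAdj E a b \<Longrightarrow> netAdj E b a"
  by (cases a; cases b) auto

lemma netAdj_irr: "\<not> netAdj E a a"
  by (cases a) auto

lemma netAdj_cl: "E \<subseteq> CI \<times> CJ \<Longrightarrow> netAdj E a b \<Longrightarrow> a \<in> Inl ` CI \<union> Inr ` CJ"
  by (cases a; cases b) auto

lemma card_V: "finite CI \<Longrightarrow> finite CJ \<Longrightarrow> card (Inl ` CI \<union> Inr ` CJ) = card CI + card CJ"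
  by (subst card_Un_disjoint) (auto simp: card_image)

lemma leaf_bip:
  assumes t: "ntree CI CJ E" and two: "2 \<le> card CI + card CJ"
  shows "(\<exists>i0 j0. i0 \<in> CI \<and> (i0, j0) \<in> E \<and> (\<forall>j. (i0, j) \<in> E \<longrightarrow> j = j0) \<and>
            ntree (CI - {i0}) CJ {e\<in>E. fst e \<noteq> i0}) \<or>
         (\<exists>i0 j0. j0 \<in> CJ \<and> (i0, j0) \<in> E \<and> (\<forall>i. (i, j0) \<in> E \<longrightarrow> i = i0) \<and>
            ntree CI (CJ - {j0}) {e\<in>E. snd e \<noteq> j0})"
proof -
  have fin: "finite CI" "finite CJ" and sub: "E \<subseteq> CI \<times> CJ" using t unfolding ntree_def by auto
  obtain v u where vu: "v \<in> Inl ` CI \<union> Inr ` CJ" "netAdj E v u" "\<forall>w. netAdj E v w \<longrightarrow> w = u"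
    "rconn ((Inl ` CI \<union> Inr ` CJ) - {v}) (\<lambda>a b. netAdj E a b \<and> a \<noteq> v \<and> b \<noteq> v)"
    "racyc ((Inl ` CI \<union> Inr ` CJ) - {v}) (\<lambda>a b. netAdj E a b \<and> a \<noteq> v \<and> b \<noteq> v)"
    using leaf_generic[of "Inl ` CI \<union> Inr ` CJ" "netAdj E"] t two fin netAdj_sym netAdj_irr netAdj_cl[OF sub]
    unfolding ntree_def card_V[OF fin] by blast
  show ?thesis
  proof (cases v)
    case (Inl i0)
    then obtain j0 where u: "u = Inr j0" using vu(2) by (cases u) auto
    have e: "(i0, j0) \<in> E" using vu(2) Inl u by simp
    have un: "\<forall>j. (i0, j) \<in> E \<longrightarrow> j = j0"
    proof (intro allI impI)
      fix j assume "(i0, j) \<in> E"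
      then have "netAdj E v (Inr j)" using Inl by simp
      then show "j = j0" using vu(3) u by auto
    qed
    have V': "(Inl ` CI \<union> Inr ` CJ) - {v} = Inl ` (CI - {i0}) \<union> Inr ` CJ" using Inl by auto
    have R': "(\<lambda>a b. netAdj E a b \<and> a \<noteq> v \<and> b \<noteq> v) = netAdj {e\<in>E. fst e \<noteq> i0}"
    proof (intro ext)
      fix a b show "(netAdj E a b \<and> a \<noteq> v \<and> b \<noteq> v) = netAdj {e\<in>E. fst e \<noteq> i0} a b"
        using Inl by (cases a; cases b) auto
    qed
    have "ntree (CI - {i0}) CJ {e\<in>E. fst e \<noteq> i0}"
      unfolding ntree_def using fin sub vu(4,5) V' R' by auto
    moreover have "i0 \<in> CI" using vu(1) Inl by auto
    ultimately show ?thesis using e un by blast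
  next
    case (Inr j0)
    then obtain i0 where u: "u = Inl i0" using vu(2) by (cases u) auto
    have e: "(i0, j0) \<in> E" using vu(2) Inr u by simp
    have un: "\<forall>i. (i, j0) \<in> E \<longrightarrow> i = i0"
    proof (intro allI impI)
      fix i assume "(i, j0) \<in> E"
      then have "netAdj E v (Inl i)" using Inr by simp
      then show "i = i0" using vu(3) u by auto
    qed
    have V': "(Inl ` CI \<union> Inr ` CJ) - {v} = Inl ` CI \<union> Inr ` (CJ - {j0})" using Inr by auto
    have R': "(\<lambda>a b. netAdj E a b \<and> a \<noteq> v \<and> b \<noteq> v) = netAdj {e\<in>E. snd e \<noteq> j0}"
    proof (intro ext)
      fix a b show "(netAdj E a b \<and> a \<noteq> v \<and> b \<noteq> v) = netAdj {e\<in>E. snd e \<noteq> j0} a b"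
        using Inr by (cases a; cases b) auto
    qed
    have "ntree CI (CJ - {j0}) {e\<in>E. snd e \<noteq> j0}"
      unfolding ntree_def using fin sub vu(4,5) V' R' by auto
    moreover have "j0 \<in> CJ" using vu(1) Inr by auto
    ultimately show ?thesis using e un by blast
  qed
qed



definition sol :: "nat set \<Rightarrow> nat set \<Rightarrow> (nat \<times> nat) set \<Rightarrow> (nat \<Rightarrow> real) \<Rightarrow> (nat \<Rightarrow> real)
    \<Rightarrow> (nat \<Rightarrow> nat \<Rightarrow> real) \<Rightarrow> bool" where
  "sol CI CJ E \<alpha> \<beta> \<psi> = ((\<forall>i\<in>CI. (\<Sum>j\<in>CJ. \<psi> i j) = \<alpha> i) \<and> (\<forall>j\<in>CJ. (\<Sum>i\<in>CI. \<psi> i j) = \<beta> j) \<and>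
      (\<forall>i j. (i, j) \<notin> E \<longrightarrow> \<psi> i j = 0))"

lemma sum_split_at:
  fixes f g :: "'a \<Rightarrow> real"
  assumes "finite A" "a \<in> A" "\<And>x. x \<in> A \<Longrightarrow> x \<noteq> a \<Longrightarrow> f x = g x"
  shows "sum f A = f a + sum g A - g a"
proof -
  have "sum f A = f a + sum f (A - {a})" using assms by (simp add: sum.remove)
  also have "sum f (A - {a}) = sum g (A - {a})" using assms by (intro sum.cong) auto
  also have "sum g (A - {a}) = sum g A - g a" using assms by (simp add: sum.remove)
  finally show ?thesis by simp
qed

lemma small_set: "finite A \<Longrightarrow> card A \<le> 1 \<Longrightarrow> A = {} \<or> (\<exists>a. A = {a})"
proof (cases "A = {}")
  case False
  assume f: "finite A" "card A \<le> 1"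
  then obtain a where "a \<in> A" using False by blast
  then have "A = {a}" using f card_le_Suc0_iff_eq[OF f(1)] by auto
  then show ?thesis by blast
qed simp

lemma reduce_a:
  assumes fin: "finite CI" "finite CJ" and sub: "E \<subseteq> CI \<times> CJ" and i0: "i0 \<in> CI" and e: "(i0, j0) \<in> E"
    and un: "\<forall>j. (i0, j) \<in> E \<longrightarrow> j = j0" and s: "sol CI CJ E \<alpha> \<beta> \<psi>"
  shows "\<psi> i0 j0 = \<alpha> i0"
    and "sol (CI - {i0}) CJ {e\<in>E. fst e \<noteq> i0} \<alpha> (\<beta>(j0 := \<beta> j0 - \<alpha> i0)) (\<lambda>i j. if i = i0 then 0 else \<psi> i j)"
proof -
  have j0: "j0 \<in> CJ" using sub e by auto
  have z: "\<psi> i0 j = 0" if "j \<noteq> j0" for j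
  proof -
    have "(i0, j) \<notin> E" using un that by blast
    then show ?thesis using s unfolding sol_def by blast
  qed
  have "\<alpha> i0 = (\<Sum>j\<in>CJ. \<psi> i0 j)" using s i0 unfolding sol_def by auto
  also have "\<dots> = (\<Sum>j\<in>CJ. if j = j0 then \<psi> i0 j0 else 0)" using z by (intro sum.cong) auto
  also have "\<dots> = \<psi> i0 j0" using j0 fin by simp
  finally show p: "\<psi> i0 j0 = \<alpha> i0" by simp
  show "sol (CI - {i0}) CJ {e\<in>E. fst e \<noteq> i0} \<alpha> (\<beta>(j0 := \<beta> j0 - \<alpha> i0)) (\<lambda>i j. if i = i0 then 0 else \<psi> i j)"
    unfolding sol_def
  proof (intro conjI ballI allI impI)
    fix i assume "i \<in> CI - {i0}"
    then show "(\<Sum>j\<in>CJ. if i = i0 then 0 else \<psi> i j) = \<alpha> i" using s unfolding sol_def by auto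
  next
    fix j assume j: "j \<in> CJ"
    have "(\<Sum>i\<in>CI - {i0}. if i = i0 then 0 else \<psi> i j) = (\<Sum>i\<in>CI - {i0}. \<psi> i j)" by (intro sum.cong) auto
    also have "\<dots> = (\<Sum>i\<in>CI. \<psi> i j) - \<psi> i0 j" using fin i0 by (simp add: sum_diff1)
    also have "\<dots> = \<beta> j - \<psi> i0 j" using s j unfolding sol_def by auto
    also have "\<dots> = (\<beta>(j0 := \<beta> j0 - \<alpha> i0)) j" using z p by (cases "j = j0") auto
    finally show "(\<Sum>i\<in>CI - {i0}. if i = i0 then 0 else \<psi> i j) = (\<beta>(j0 := \<beta> j0 - \<alpha> i0)) j" .
  next
    fix i j assume "(i, j) \<notin> {e \<in> E. fst e \<noteq> i0}"
    then show "(if i = i0 then 0 else \<psi> i j) = 0" using s unfolding sol_def by auto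
  qed
qed

lemma reduce_b:
  assumes fin: "finite CI" "finite CJ" and sub: "E \<subseteq> CI \<times> CJ" and j0: "j0 \<in> CJ" and e: "(i0, j0) \<in> E"
    and un: "\<forall>i. (i, j0) \<in> E \<longrightarrow> i = i0" and s: "sol CI CJ E \<alpha> \<beta> \<psi>"
  shows "\<psi> i0 j0 = \<beta> j0" and "\<And>i. i \<noteq> i0 \<Longrightarrow> \<psi> i j0 = 0"
    and "sol CI (CJ - {j0}) {e\<in>E. snd e \<noteq> j0} (\<alpha>(i0 := \<alpha> i0 - \<beta> j0)) \<beta> (\<lambda>i j. if j = j0 then 0 else \<psi> i j)"
proof -
  have i0: "i0 \<in> CI" using sub e by auto
  show z: "\<psi> i j0 = 0" if "i \<noteq> i0" for i
  proof -
    have "(i, j0) \<notin> E" using un that by blast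
    then show ?thesis using s unfolding sol_def by blast
  qed
  have "\<beta> j0 = (\<Sum>i\<in>CI. \<psi> i j0)" using s j0 unfolding sol_def by auto
  also have "\<dots> = (\<Sum>i\<in>CI. if i = i0 then \<psi> i0 j0 else 0)" using z by (intro sum.cong) auto
  also have "\<dots> = \<psi> i0 j0" using i0 fin by simp
  finally show p: "\<psi> i0 j0 = \<beta> j0" by simp
  show "sol CI (CJ - {j0}) {e\<in>E. snd e \<noteq> j0} (\<alpha>(i0 := \<alpha> i0 - \<beta> j0)) \<beta> (\<lambda>i j. if j = j0 then 0 else \<psi> i j)"
    unfolding sol_def
  proof (intro conjI ballI allI impI)
    fix j assume "j \<in> CJ - {j0}"
    then show "(\<Sum>i\<in>CI. if j = j0 then 0 else \<psi> i j) = \<beta> j" using s unfolding sol_def by auto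
  next
    fix i assume i: "i \<in> CI"
    have "(\<Sum>j\<in>CJ - {j0}. if j = j0 then 0 else \<psi> i j) = (\<Sum>j\<in>CJ - {j0}. \<psi> i j)" by (intro sum.cong) auto
    also have "\<dots> = (\<Sum>j\<in>CJ. \<psi> i j) - \<psi> i j0" using fin j0 by (simp add: sum_diff1)
    also have "\<dots> = \<alpha> i - \<psi> i j0" using s i unfolding sol_def by auto
    also have "\<dots> = (\<alpha>(i0 := \<alpha> i0 - \<beta> j0)) i" using z p by (cases "i = i0") auto
    finally show "(\<Sum>j\<in>CJ - {j0}. if j = j0 then 0 else \<psi> i j) = (\<alpha>(i0 := \<alpha> i0 - \<beta> j0)) i" .
  next
    fix i j assume "(i, j) \<notin> {e \<in> E. snd e \<noteq> j0}"
    then show "(if j = j0 then 0 else \<psi> i j) = 0" using s unfolding sol_def by auto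
  qed
qed

lemma base_sets:
  assumes "finite CI" "finite CJ" "card CI + card CJ \<le> 1"
  shows "(CI = {} \<and> (CJ = {} \<or> (\<exists>j. CJ = {j}))) \<or> (\<exists>i. CI = {i} \<and> CJ = {})"
proof -
  have "card CI \<le> 1" "card CJ \<le> 1" using assms by auto
  then have a: "CI = {} \<or> (\<exists>i. CI = {i})" "CJ = {} \<or> (\<exists>j. CJ = {j})" using small_set assms by blast+
  show ?thesis using a assms by auto
qed

lemma sol_exists:
  "card CI + card CJ = n \<Longrightarrow> ntree CI CJ E \<Longrightarrow> sum \<alpha> CI = sum \<beta> CJ \<Longrightarrow> \<exists>\<psi>. sol CI CJ E \<alpha> \<beta> \<psi>"
proof (induction n arbitrary: CI CJ E \<alpha> \<beta> rule: less_induct)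
  case (less n)
  have fin: "finite CI" "finite CJ" and sub: "E \<subseteq> CI \<times> CJ" using less.prems unfolding ntree_def by auto
  show ?case
  proof (cases "n \<le> 1")
    case True
    then have bs: "(CI = {} \<and> (CJ = {} \<or> (\<exists>j. CJ = {j}))) \<or> (\<exists>i. CI = {i} \<and> CJ = {})"
      using base_sets fin less.prems(1) by blast
    then have "E = {}" using sub by auto
    have "sol CI CJ E \<alpha> \<beta> (\<lambda>_ _. 0)" using bs less.prems(3) \<open>E = {}\<close> unfolding sol_def by auto
    then show ?thesis by blast
  next
    case False
    then have two: "2 \<le> card CI + card CJ" using less.prems(1) by simp
    from leaf_bip[OF less.prems(2) two] show ?thesis
    proof
      assume "\<exists>i0 j0. i0 \<in> CI \<and> (i0, j0) \<in> E \<and> (\<forall>j. (i0, j) \<in> E \<longrightarrow> j = j0) \<and>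
            ntree (CI - {i0}) CJ {e\<in>E. fst e \<noteq> i0}"
      then obtain i0 j0 where i0: "i0 \<in> CI" and e: "(i0, j0) \<in> E" and un: "\<forall>j. (i0, j) \<in> E \<longrightarrow> j = j0"
        and t: "ntree (CI - {i0}) CJ {e\<in>E. fst e \<noteq> i0}" by blast
      have j0: "j0 \<in> CJ" using sub e by auto
      have lt: "card (CI - {i0}) + card CJ < n" using less.prems(1) card_Diff1_less[OF fin(1) i0] by simp
      have "sum \<alpha> (CI - {i0}) = sum (\<beta>(j0 := \<beta> j0 - \<alpha> i0)) CJ"
      proof -
        have "sum \<alpha> (CI - {i0}) = sum \<alpha> CI - \<alpha> i0" using fin i0 by (simp add: sum_diff1)
        moreover have "sum (\<beta>(j0 := \<beta> j0 - \<alpha> i0)) CJ = (\<beta> j0 - \<alpha> i0) + sum \<beta> CJ - \<beta> j0"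
          using sum_split_at[OF fin(2) j0, of "\<beta>(j0 := \<beta> j0 - \<alpha> i0)" \<beta>] by simp
        ultimately show ?thesis using less.prems(3) by simp
      qed
      from less.IH[OF lt refl t this] obtain \<psi>' where s': "sol (CI - {i0}) CJ {e\<in>E. fst e \<noteq> i0} \<alpha> (\<beta>(j0 := \<beta> j0 - \<alpha> i0)) \<psi>'" by blast
      define \<psi> where "\<psi> = (\<lambda>i j. if i = i0 then (if j = j0 then \<alpha> i0 else 0) else \<psi>' i j)"
      have "sol CI CJ E \<alpha> \<beta> \<psi>" unfolding sol_def
      proof (intro conjI ballI allI impI)
        fix i assume i: "i \<in> CI"
        show "(\<Sum>j\<in>CJ. \<psi> i j) = \<alpha> i"
        proof (cases "i = i0")
          case True then show ?thesis using j0 fin unfolding \<psi>_def by simp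
        next
          case False then show ?thesis using s' i unfolding \<psi>_def sol_def by auto
        qed
      next
        fix j assume j: "j \<in> CJ"
        have "(\<Sum>i\<in>CI. \<psi> i j) = \<psi> i0 j + (\<Sum>i\<in>CI - {i0}. \<psi> i j)" using fin i0 by (simp add: sum.remove)
        also have "(\<Sum>i\<in>CI - {i0}. \<psi> i j) = (\<Sum>i\<in>CI - {i0}. \<psi>' i j)" unfolding \<psi>_def by (intro sum.cong) auto
        also have "\<dots> = (\<beta>(j0 := \<beta> j0 - \<alpha> i0)) j" using s' j unfolding sol_def by auto
        finally show "(\<Sum>i\<in>CI. \<psi> i j) = \<beta> j" unfolding \<psi>_def by (cases "j = j0") auto
      next
        fix i j assume "(i, j) \<notin> E"
        then show "\<psi> i j = 0" using s' e unfolding \<psi>_def sol_def by auto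
      qed
      then show ?thesis by blast
    next
      assume "\<exists>i0 j0. j0 \<in> CJ \<and> (i0, j0) \<in> E \<and> (\<forall>i. (i, j0) \<in> E \<longrightarrow> i = i0) \<and>
            ntree CI (CJ - {j0}) {e\<in>E. snd e \<noteq> j0}"
      then obtain i0 j0 where j0: "j0 \<in> CJ" and e: "(i0, j0) \<in> E" and un: "\<forall>i. (i, j0) \<in> E \<longrightarrow> i = i0"
        and t: "ntree CI (CJ - {j0}) {e\<in>E. snd e \<noteq> j0}" by blast
      have i0: "i0 \<in> CI" using sub e by auto
      have lt: "card CI + card (CJ - {j0}) < n" using less.prems(1) card_Diff1_less[OF fin(2) j0] by simp
      have "sum (\<alpha>(i0 := \<alpha> i0 - \<beta> j0)) CI = sum \<beta> (CJ - {j0})"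
      proof -
        have "sum \<beta> (CJ - {j0}) = sum \<beta> CJ - \<beta> j0" using fin j0 by (simp add: sum_diff1)
        moreover have "sum (\<alpha>(i0 := \<alpha> i0 - \<beta> j0)) CI = (\<alpha> i0 - \<beta> j0) + sum \<alpha> CI - \<alpha> i0"
          using sum_split_at[OF fin(1) i0, of "\<alpha>(i0 := \<alpha> i0 - \<beta> j0)" \<alpha>] by simp
        ultimately show ?thesis using less.prems(3) by simp
      qed
      from less.IH[OF lt refl t this] obtain \<psi>' where s': "sol CI (CJ - {j0}) {e\<in>E. snd e \<noteq> j0} (\<alpha>(i0 := \<alpha> i0 - \<beta> j0)) \<beta> \<psi>'" by blast
      define \<psi> where "\<psi> = (\<lambda>i j. if j = j0 then (if i = i0 then \<beta> j0 else 0) else \<psi>' i j)"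
      have "sol CI CJ E \<alpha> \<beta> \<psi>" unfolding sol_def
      proof (intro conjI ballI allI impI)
        fix j assume j: "j \<in> CJ"
        show "(\<Sum>i\<in>CI. \<psi> i j) = \<beta> j"
        proof (cases "j = j0")
          case True then show ?thesis using i0 fin unfolding \<psi>_def by simp
        next
          case False then show ?thesis using s' j unfolding \<psi>_def sol_def by auto
        qed
      next
        fix i assume i: "i \<in> CI"
        have "(\<Sum>j\<in>CJ. \<psi> i j) = \<psi> i j0 + (\<Sum>j\<in>CJ - {j0}. \<psi> i j)" using fin j0 by (simp add: sum.remove)
        also have "(\<Sum>j\<in>CJ - {j0}. \<psi> i j) = (\<Sum>j\<in>CJ - {j0}. \<psi>' i j)" unfolding \<psi>_def by (intro sum.cong) auto
        also have "\<dots> = (\<alpha>(i0 := \<alpha> i0 - \<beta> j0)) i" using s' i unfolding sol_def by auto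
        finally show "(\<Sum>j\<in>CJ. \<psi> i j) = \<alpha> i" unfolding \<psi>_def by (cases "i = i0") auto
      next
        fix i j assume "(i, j) \<notin> E"
        then show "\<psi> i j = 0" using s' e unfolding \<psi>_def sol_def by auto
      qed
      then show ?thesis by blast
    qed
  qed
qed



lemma sol_unique:
  "card CI + card CJ = n \<Longrightarrow> ntree CI CJ E \<Longrightarrow> sol CI CJ E \<alpha> \<beta> \<psi>1 \<Longrightarrow> sol CI CJ E \<alpha> \<beta> \<psi>2 \<Longrightarrow> \<psi>1 = \<psi>2"
proof (induction n arbitrary: CI CJ E \<alpha> \<beta> \<psi>1 \<psi>2 rule: less_induct)
  case (less n)
  have fin: "finite CI" "finite CJ" and sub: "E \<subseteq> CI \<times> CJ" using less.prems unfolding ntree_def by auto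
  show ?case
  proof (cases "n \<le> 1")
    case True
    then have bs: "(CI = {} \<and> (CJ = {} \<or> (\<exists>j. CJ = {j}))) \<or> (\<exists>i. CI = {i} \<and> CJ = {})"
      using base_sets fin less.prems(1) by blast
    then have "E = {}" using sub by auto
    then show ?thesis using less.prems(3,4) unfolding sol_def by (intro ext) auto
  next
    case False
    then have two: "2 \<le> card CI + card CJ" using less.prems(1) by simp
    from leaf_bip[OF less.prems(2) two] show ?thesis
    proof
      assume "\<exists>i0 j0. i0 \<in> CI \<and> (i0, j0) \<in> E \<and> (\<forall>j. (i0, j) \<in> E \<longrightarrow> j = j0) \<and>
            ntree (CI - {i0}) CJ {e\<in>E. fst e \<noteq> i0}"
      then obtain i0 j0 where i0: "i0 \<in> CI" and e: "(i0, j0) \<in> E" and un: "\<forall>j. (i0, j) \<in> E \<longrightarrow> j = j0"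
        and t: "ntree (CI - {i0}) CJ {e\<in>E. fst e \<noteq> i0}" by blast
      have lt: "card (CI - {i0}) + card CJ < n" using less.prems(1) card_Diff1_less[OF fin(1) i0] by simp
      note r1 = reduce_a[OF fin sub i0 e un less.prems(3)]
      note r2 = reduce_a[OF fin sub i0 e un less.prems(4)]
      have eq: "(\<lambda>i j. if i = i0 then 0 else \<psi>1 i j) = (\<lambda>i j. if i = i0 then 0 else \<psi>2 i j)"
        using less.IH[OF lt refl t r1(2) r2(2)] .
      show "\<psi>1 = \<psi>2"
      proof (intro ext)
        fix i j
        show "\<psi>1 i j = \<psi>2 i j"
        proof (cases "i = i0")
          case True
          show ?thesis
          proof (cases "j = j0")
            case True then show ?thesis using r1(1) r2(1) \<open>i = i0\<close> by simp
          next
            case False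
            then have "(i, j) \<notin> E" using un \<open>i = i0\<close> by blast
            then show ?thesis using less.prems(3,4) unfolding sol_def by simp
          qed
        next
          case False
          then show ?thesis using fun_cong[OF fun_cong[OF eq, of i], of j] by simp
        qed
      qed
    next
      assume "\<exists>i0 j0. j0 \<in> CJ \<and> (i0, j0) \<in> E \<and> (\<forall>i. (i, j0) \<in> E \<longrightarrow> i = i0) \<and>
            ntree CI (CJ - {j0}) {e\<in>E. snd e \<noteq> j0}"
      then obtain i0 j0 where j0: "j0 \<in> CJ" and e: "(i0, j0) \<in> E" and un: "\<forall>i. (i, j0) \<in> E \<longrightarrow> i = i0"
        and t: "ntree CI (CJ - {j0}) {e\<in>E. snd e \<noteq> j0}" by blast
      have lt: "card CI + card (CJ - {j0}) < n" using less.prems(1) card_Diff1_less[OF fin(2) j0] by simp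
      note r1 = reduce_b[OF fin sub j0 e un less.prems(3)]
      note r2 = reduce_b[OF fin sub j0 e un less.prems(4)]
      have eq: "(\<lambda>i j. if j = j0 then 0 else \<psi>1 i j) = (\<lambda>i j. if j = j0 then 0 else \<psi>2 i j)"
        using less.IH[OF lt refl t r1(3) r2(3)] .
      show "\<psi>1 = \<psi>2"
      proof (intro ext)
        fix i j
        show "\<psi>1 i j = \<psi>2 i j"
        proof (cases "j = j0")
          case True
          show ?thesis
          proof (cases "i = i0")
            case True then show ?thesis using r1(1) r2(1) \<open>j = j0\<close> by simp
          next
            case False then show ?thesis using r1(2) r2(2) \<open>j = j0\<close> by simp
          qed
        next
          case False
          then show ?thesis using fun_cong[OF fun_cong[OF eq, of i], of j] by simp
        qed
      qed
    qed
  qed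
qed

definition repP :: "nat set \<Rightarrow> nat set \<Rightarrow> (nat \<times> nat) set \<Rightarrow> (nat \<Rightarrow> nat \<Rightarrow> real) \<Rightarrow> (nat \<Rightarrow> nat)
   \<Rightarrow> (nat \<Rightarrow> nat \<Rightarrow> real) \<Rightarrow> (nat \<Rightarrow> nat \<Rightarrow> real) \<Rightarrow> bool" where
  "repP CI CJ E \<mu> rk B1 B2 = (inj_on rk CI \<and> rk ` CI \<subseteq> {..<card CI} \<and>
     (\<forall>i\<in>CI. \<forall>k\<in>CI. rk i < rk k \<longrightarrow> B1 i k = 0) \<and> (\<forall>i\<in>CI. B1 i i > 0) \<and>
     (\<forall>\<alpha> \<beta> \<psi>. sol CI CJ E \<alpha> \<beta> \<psi> \<longrightarrow>
        (\<forall>i\<in>CI. (\<Sum>j\<in>CJ. \<mu> i j * \<psi> i j) = (\<Sum>k\<in>CI. B1 i k * \<alpha> k) + (\<Sum>j\<in>CJ. B2 i j * \<beta> j))))"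

lemma rep_exists:
  "card CI + card CJ = n \<Longrightarrow> ntree CI CJ E \<Longrightarrow> \<forall>i j. (i, j) \<in> E \<longrightarrow> \<mu> i j > 0 \<Longrightarrow>
    \<exists>rk B1 B2. repP CI CJ E \<mu> rk B1 B2"
proof (induction n arbitrary: CI CJ E rule: less_induct)
  case (less n)
  have fin: "finite CI" "finite CJ" and sub: "E \<subseteq> CI \<times> CJ" using less.prems unfolding ntree_def by auto
  show ?case
  proof (cases "n \<le> 1")
    case True
    then have bs: "(CI = {} \<and> (CJ = {} \<or> (\<exists>j. CJ = {j}))) \<or> (\<exists>i. CI = {i} \<and> CJ = {})"
      using base_sets fin less.prems(1) by blast
    then have "E = {}" using sub by auto
    have "repP CI CJ E \<mu> (\<lambda>_. 0) (\<lambda>_ _. 1) (\<lambda>_ _. 0)"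
      using bs unfolding repP_def sol_def by auto
    then show ?thesis by blast
  next
    case False
    then have two: "2 \<le> card CI + card CJ" using less.prems(1) by simp
    from leaf_bip[OF less.prems(2) two] show ?thesis
    proof
      assume "\<exists>i0 j0. i0 \<in> CI \<and> (i0, j0) \<in> E \<and> (\<forall>j. (i0, j) \<in> E \<longrightarrow> j = j0) \<and>
            ntree (CI - {i0}) CJ {e\<in>E. fst e \<noteq> i0}"
      then obtain i0 j0 where i0: "i0 \<in> CI" and e: "(i0, j0) \<in> E" and un: "\<forall>j. (i0, j) \<in> E \<longrightarrow> j = j0"
        and t: "ntree (CI - {i0}) CJ {e\<in>E. fst e \<noteq> i0}" by blast
      have j0: "j0 \<in> CJ" using sub e by auto
      have lt: "card (CI - {i0}) + card CJ < n" using less.prems(1) card_Diff1_less[OF fin(1) i0] by simp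
      have mu': "\<forall>i j. (i, j) \<in> {e\<in>E. fst e \<noteq> i0} \<longrightarrow> \<mu> i j > 0" using less.prems(3) by auto
      from less.IH[OF lt refl t mu'] obtain rk' B1' B2' where
        R: "repP (CI - {i0}) CJ {e\<in>E. fst e \<noteq> i0} \<mu> rk' B1' B2'" by blast
      define rk where "rk = (\<lambda>i. if i = i0 then 0 else Suc (rk' i))"
      define B1 where "B1 = (\<lambda>i k. if i = i0 then (if k = i0 then \<mu> i0 j0 else 0)
                                  else if k = i0 then - B2' i j0 else B1' i k)"
      define B2 where "B2 = (\<lambda>i j. if i = i0 then 0 else B2' i j)"
      have cardCI: "card CI = Suc (card (CI - {i0}))" proof -
        have "card CI > 0" using fin i0 card_gt_0_iff by blast
        then show ?thesis by (simp add: card_Diff_singleton[OF i0])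
      qed
      have "repP CI CJ E \<mu> rk B1 B2" unfolding repP_def
      proof (intro conjI)
        show "inj_on rk CI" using R unfolding repP_def inj_on_def rk_def by auto
        show "rk ` CI \<subseteq> {..<card CI}" using R cardCI unfolding repP_def rk_def by auto
        show "\<forall>i\<in>CI. \<forall>k\<in>CI. rk i < rk k \<longrightarrow> B1 i k = 0" using R unfolding repP_def rk_def B1_def by auto
        show "\<forall>i\<in>CI. B1 i i > 0" using R less.prems(3) e unfolding repP_def B1_def by auto
        show "\<forall>\<alpha> \<beta> \<psi>. sol CI CJ E \<alpha> \<beta> \<psi> \<longrightarrow>
          (\<forall>i\<in>CI. (\<Sum>j\<in>CJ. \<mu> i j * \<psi> i j) = (\<Sum>k\<in>CI. B1 i k * \<alpha> k) + (\<Sum>j\<in>CJ. B2 i j * \<beta> j))"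
        proof (intro allI impI ballI)
          fix \<alpha> \<beta> \<psi> i assume s: "sol CI CJ E \<alpha> \<beta> \<psi>" and i: "i \<in> CI"
          note r = reduce_a[OF fin sub i0 e un s]
          show "(\<Sum>j\<in>CJ. \<mu> i j * \<psi> i j) = (\<Sum>k\<in>CI. B1 i k * \<alpha> k) + (\<Sum>j\<in>CJ. B2 i j * \<beta> j)"
          proof (cases "i = i0")
            case True
            have "(\<Sum>j\<in>CJ. \<mu> i j * \<psi> i j) = (\<Sum>j\<in>CJ. if j = j0 then \<mu> i0 j0 * \<alpha> i0 else 0)"
            proof (intro sum.cong refl)
              fix j assume "j \<in> CJ"
              show "\<mu> i j * \<psi> i j = (if j = j0 then \<mu> i0 j0 * \<alpha> i0 else 0)"
              proof (cases "j = j0")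
                case True then show ?thesis using r(1) \<open>i = i0\<close> by simp
              next
                case False
                then have "(i, j) \<notin> E" using un \<open>i = i0\<close> by blast
                then show ?thesis using s False unfolding sol_def by simp
              qed
            qed
            also have "\<dots> = \<mu> i0 j0 * \<alpha> i0" using fin j0 by simp
            also have "\<dots> = (\<Sum>k\<in>CI. B1 i k * \<alpha> k) + (\<Sum>j\<in>CJ. B2 i j * \<beta> j)"
            proof -
              have "(\<Sum>k\<in>CI. B1 i k * \<alpha> k) = (\<Sum>k\<in>CI. if k = i0 then \<mu> i0 j0 * \<alpha> i0 else 0)"
                by (intro sum.cong) (auto simp: B1_def True)
              also have "\<dots> = \<mu> i0 j0 * \<alpha> i0" using fin i0 by simp
              finally show ?thesis using True unfolding B2_def by simp
            qed
            finally show ?thesis .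
          next
            case False
            have iI: "i \<in> CI - {i0}" using i False by simp
            have IHe: "(\<Sum>j\<in>CJ. \<mu> i j * (if i = i0 then 0 else \<psi> i j)) =
               (\<Sum>k\<in>CI - {i0}. B1' i k * \<alpha> k) + (\<Sum>j\<in>CJ. B2' i j * (\<beta>(j0 := \<beta> j0 - \<alpha> i0)) j)"
              using R r(2) iI unfolding repP_def by blast
            have l: "(\<Sum>j\<in>CJ. \<mu> i j * (if i = i0 then 0 else \<psi> i j)) = (\<Sum>j\<in>CJ. \<mu> i j * \<psi> i j)"
              using False by simp
            have b2: "(\<Sum>j\<in>CJ. B2' i j * (\<beta>(j0 := \<beta> j0 - \<alpha> i0)) j) =
                B2' i j0 * (\<beta> j0 - \<alpha> i0) + (\<Sum>j\<in>CJ. B2' i j * \<beta> j) - B2' i j0 * \<beta> j0"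
              using sum_split_at[OF fin(2) j0, of "\<lambda>j. B2' i j * (\<beta>(j0 := \<beta> j0 - \<alpha> i0)) j" "\<lambda>j. B2' i j * \<beta> j"]
              by simp
            have b1: "(\<Sum>k\<in>CI. B1 i k * \<alpha> k) = B1 i i0 * \<alpha> i0 + (\<Sum>k\<in>CI - {i0}. B1 i k * \<alpha> k)"
              using fin i0 by (simp add: sum.remove)
            have b1': "(\<Sum>k\<in>CI - {i0}. B1 i k * \<alpha> k) = (\<Sum>k\<in>CI - {i0}. B1' i k * \<alpha> k)"
              using False unfolding B1_def by (intro sum.cong) auto
            have b2'': "(\<Sum>j\<in>CJ. B2 i j * \<beta> j) = (\<Sum>j\<in>CJ. B2' i j * \<beta> j)"
              using False unfolding B2_def by simp
            have "B1 i i0 = - B2' i j0" using False unfolding B1_def by simp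
            then show ?thesis using IHe l b2 b1 b1' b2'' by (simp add: algebra_simps)
          qed
        qed
      qed
      then show ?thesis by blast
    next
      assume "\<exists>i0 j0. j0 \<in> CJ \<and> (i0, j0) \<in> E \<and> (\<forall>i. (i, j0) \<in> E \<longrightarrow> i = i0) \<and>
            ntree CI (CJ - {j0}) {e\<in>E. snd e \<noteq> j0}"
      then obtain i0 j0 where j0: "j0 \<in> CJ" and e: "(i0, j0) \<in> E" and un: "\<forall>i. (i, j0) \<in> E \<longrightarrow> i = i0"
        and t: "ntree CI (CJ - {j0}) {e\<in>E. snd e \<noteq> j0}" by blast
      have i0: "i0 \<in> CI" using sub e by auto
      have lt: "card CI + card (CJ - {j0}) < n" using less.prems(1) card_Diff1_less[OF fin(2) j0] by simp
      have mu': "\<forall>i j. (i, j) \<in> {e\<in>E. snd e \<noteq> j0} \<longrightarrow> \<mu> i j > 0" using less.prems(3) by auto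
      from less.IH[OF lt refl t mu'] obtain rk B1 B2' where
        R: "repP CI (CJ - {j0}) {e\<in>E. snd e \<noteq> j0} \<mu> rk B1 B2'" by blast
      define B2 where "B2 = (\<lambda>i j. if j = j0 then (if i = i0 then \<mu> i0 j0 else 0) - B1 i i0 else B2' i j)"
      have "repP CI CJ E \<mu> rk B1 B2" unfolding repP_def
      proof (intro conjI)
        show "inj_on rk CI" "rk ` CI \<subseteq> {..<card CI}" "\<forall>i\<in>CI. \<forall>k\<in>CI. rk i < rk k \<longrightarrow> B1 i k = 0"
          "\<forall>i\<in>CI. B1 i i > 0" using R unfolding repP_def by auto
        show "\<forall>\<alpha> \<beta> \<psi>. sol CI CJ E \<alpha> \<beta> \<psi> \<longrightarrow>
          (\<forall>i\<in>CI. (\<Sum>j\<in>CJ. \<mu> i j * \<psi> i j) = (\<Sum>k\<in>CI. B1 i k * \<alpha> k) + (\<Sum>j\<in>CJ. B2 i j * \<beta> j))"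
        proof (intro allI impI ballI)
          fix \<alpha> \<beta> \<psi> i assume s: "sol CI CJ E \<alpha> \<beta> \<psi>" and i: "i \<in> CI"
          note r = reduce_b[OF fin sub j0 e un s]
          have IHe: "(\<Sum>j\<in>CJ - {j0}. \<mu> i j * (if j = j0 then 0 else \<psi> i j)) =
               (\<Sum>k\<in>CI. B1 i k * (\<alpha>(i0 := \<alpha> i0 - \<beta> j0)) k) + (\<Sum>j\<in>CJ - {j0}. B2' i j * \<beta> j)"
            using R r(3) i unfolding repP_def by blast
          have l: "(\<Sum>j\<in>CJ. \<mu> i j * \<psi> i j) = \<mu> i j0 * \<psi> i j0 + (\<Sum>j\<in>CJ - {j0}. \<mu> i j * \<psi> i j)"
            using fin j0 by (simp add: sum.remove)
          have l2: "(\<Sum>j\<in>CJ - {j0}. \<mu> i j * (if j = j0 then 0 else \<psi> i j)) = (\<Sum>j\<in>CJ - {j0}. \<mu> i j * \<psi> i j)"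
            by (intro sum.cong) auto
          have b1: "(\<Sum>k\<in>CI. B1 i k * (\<alpha>(i0 := \<alpha> i0 - \<beta> j0)) k) =
               (\<Sum>k\<in>CI. B1 i k * \<alpha> k) - B1 i i0 * \<beta> j0"
            using sum_split_at[OF fin(1) i0, of "\<lambda>k. B1 i k * (\<alpha>(i0 := \<alpha> i0 - \<beta> j0)) k" "\<lambda>k. B1 i k * \<alpha> k"]
            by (simp add: algebra_simps)
          have b2: "(\<Sum>j\<in>CJ. B2 i j * \<beta> j) = B2 i j0 * \<beta> j0 + (\<Sum>j\<in>CJ - {j0}. B2 i j * \<beta> j)"
            using fin j0 by (simp add: sum.remove)
          have b2': "(\<Sum>j\<in>CJ - {j0}. B2 i j * \<beta> j) = (\<Sum>j\<in>CJ - {j0}. B2' i j * \<beta> j)"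
            unfolding B2_def by (intro sum.cong) auto
          define c where "c = (if i = i0 then \<mu> i0 j0 * \<beta> j0 else 0)"
          have p: "\<mu> i j0 * \<psi> i j0 = c"
            using r(1) r(2)[of i] unfolding c_def by auto
          have q: "B2 i j0 * \<beta> j0 = c - B1 i i0 * \<beta> j0" unfolding B2_def c_def by (simp add: algebra_simps)
          show "(\<Sum>j\<in>CJ. \<mu> i j * \<psi> i j) = (\<Sum>k\<in>CI. B1 i k * \<alpha> k) + (\<Sum>j\<in>CJ. B2 i j * \<beta> j)"
            using IHe l l2 b1 b2 b2' p q by linarith
        qed
      qed
      then show ?thesis by blast
    qed
  qed
qed



theorem mainTheorem5:
  fixes nI nJ :: nat and E :: "(nat \<times> nat) set"
    and lam \<gamma> ell :: "nat \<Rightarrow> real" and \<mu> :: "nat \<Rightarrow> nat \<Rightarrow> real"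
  assumes "nI \<ge> 1" and "nJ \<ge> 1"
    and "is_tree nI nJ E"
    and "\<forall>i<nI. lam i > 0"
    and "\<forall>i<nI. \<gamma> i \<ge> 0"
    and "\<forall>i<nI. \<forall>j<nJ. (i, j) \<in> E \<longrightarrow> \<mu> i j > 0"
    and "\<forall>i<nI. \<forall>j<nJ. (i, j) \<notin> E \<longrightarrow> \<mu> i j = 0"
  shows "\<exists>\<sigma> :: nat \<Rightarrow> nat. \<exists>B1 :: nat \<Rightarrow> nat \<Rightarrow> real. \<exists>B2 :: nat \<Rightarrow> nat \<Rightarrow> real.
           bij_betw \<sigma> {..<nI} {..<nI} \<and>
           (\<forall>i<nI. \<forall>k<nI. \<sigma> i < \<sigma> k \<longrightarrow> B1 i k = 0) \<and>
           (\<forall>i<nI. B1 i i > 0) \<and>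
           (\<forall>x uc us. actU nI nJ uc us \<longrightarrow>
              (\<forall>i<nI. drift nI nJ E \<mu> \<gamma> ell x uc us i =
                 - (\<Sum>k<nI. B1 i k * (x k - pospart (esum nI x) * uc k))
                 + negpart (esum nI x) * (\<Sum>j<nJ. B2 i j * us j)
                 - pospart (esum nI x) * \<gamma> i * uc i + ell i))"
proof -
  have sub: "E \<subseteq> {..<nI} \<times> {..<nJ}" using assms(3) unfolding is_tree_def by blast
  have T: "ntree {..<nI} {..<nJ} E"
    using assms(3) unfolding is_tree_def graph_connected_def has_cycle_def ntree_def rconn_def racyc_def
      netV_def is_walk_rw by auto
  have mu: "\<forall>i j. (i, j) \<in> E \<longrightarrow> \<mu> i j > 0" using assms(6) sub by blast
  obtain rk B1 B2 where R: "repP {..<nI} {..<nJ} E \<mu> rk B1 B2" using rep_exists[OF refl T mu] by blast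
  have bij: "bij_betw rk {..<nI} {..<nI}"
  proof -
    have inj: "inj_on rk {..<nI}" and im: "rk ` {..<nI} \<subseteq> {..<nI}" using R unfolding repP_def by auto
    have "card (rk ` {..<nI}) = card {..<nI::nat}" using card_image[OF inj] by simp
    then have "rk ` {..<nI} = {..<nI}" using card_subset_eq[OF _ im] by simp
    then show ?thesis using inj unfolding bij_betw_def by blast
  qed
  have main: "drift nI nJ E \<mu> \<gamma> ell x uc us i =
                 - (\<Sum>k<nI. B1 i k * (x k - pospart (esum nI x) * uc k))
                 + negpart (esum nI x) * (\<Sum>j<nJ. B2 i j * us j)
                 - pospart (esum nI x) * \<gamma> i * uc i + ell i"
    if act: "actU nI nJ uc us" and i: "i < nI" for x uc us i
  proof -
    define p where "p = pospart (esum nI x)"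
    define q where "q = negpart (esum nI x)"
    define \<alpha> where "\<alpha> = (\<lambda>k. x k - p * uc k)"
    define \<beta> where "\<beta> = (\<lambda>j. - q * us j)"
    have uc1: "(\<Sum>k<nI. uc k) = 1" and us1: "(\<Sum>j<nJ. us j) = 1" using act unfolding actU_def esum_def by auto
    have "sum \<alpha> {..<nI} = esum nI x - p" unfolding \<alpha>_def esum_def
      by (simp add: sum_subtractf sum_distrib_left[symmetric] uc1)
    also have "\<dots> = - q" unfolding p_def q_def pospart_def negpart_def by simp
    also have "\<dots> = sum \<beta> {..<nJ}" unfolding \<beta>_def by (simp add: sum_negf sum_distrib_left[symmetric] us1)
    finally have ss: "sum \<alpha> {..<nI} = sum \<beta> {..<nJ}" .
    obtain \<psi> where s: "sol {..<nI} {..<nJ} E \<alpha> \<beta> \<psi>" using sol_exists[OF refl T ss] by blast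
    have G: "Ghat nI nJ E uc us x = \<psi>"
      unfolding Ghat_def Gmat_def
    proof (rule the_equality)
      show "(\<forall>i<nI. (\<Sum>j<nJ. \<psi> i j) = x i - pospart (esum nI x) * uc i) \<and>
            (\<forall>j<nJ. (\<Sum>i<nI. \<psi> i j) = - negpart (esum nI x) * us j) \<and>
            (\<forall>i j. (i, j) \<notin> E \<longrightarrow> \<psi> i j = 0)"
        using s unfolding sol_def \<alpha>_def \<beta>_def p_def q_def by auto
    next
      fix \<phi> assume "(\<forall>i<nI. (\<Sum>j<nJ. \<phi> i j) = x i - pospart (esum nI x) * uc i) \<and>
            (\<forall>j<nJ. (\<Sum>i<nI. \<phi> i j) = - negpart (esum nI x) * us j) \<and>
            (\<forall>i j. (i, j) \<notin> E \<longrightarrow> \<phi> i j = 0)"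
      then have "sol {..<nI} {..<nJ} E \<alpha> \<beta> \<phi>" unfolding sol_def \<alpha>_def \<beta>_def p_def q_def by auto
      then show "\<phi> = \<psi>" using sol_unique[OF refl T _ s] by blast
    qed
    have sumE: "(\<Sum>j\<in>{j. j < nJ \<and> (i, j) \<in> E}. \<mu> i j * \<psi> i j) = (\<Sum>j<nJ. \<mu> i j * \<psi> i j)"
      by (rule sum.mono_neutral_left) (use s in \<open>auto simp: sol_def\<close>)
    have rep: "(\<Sum>j<nJ. \<mu> i j * \<psi> i j) = (\<Sum>k<nI. B1 i k * \<alpha> k) + (\<Sum>j<nJ. B2 i j * \<beta> j)"
      using R s i unfolding repP_def by auto
    have b2: "(\<Sum>j<nJ. B2 i j * \<beta> j) = - q * (\<Sum>j<nJ. B2 i j * us j)"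
      unfolding \<beta>_def by (simp add: sum_distrib_left algebra_simps)
    have "drift nI nJ E \<mu> \<gamma> ell x uc us i = - (\<Sum>k<nI. B1 i k * \<alpha> k) + q * (\<Sum>j<nJ. B2 i j * us j)
        - \<gamma> i * p * uc i + ell i"
      unfolding drift_def G sumE rep b2 p_def by simp
    then show ?thesis unfolding \<alpha>_def p_def q_def by (simp add: algebra_simps)
  qed
  show ?thesis
    apply (rule exI[of _ rk], rule exI[of _ B1], rule exI[of _ B2])
    using bij R main unfolding repP_def by auto
qed

end
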